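(* For every integer $d\ge 1$ there is a constant $c_d>0$ such that the following holds. Let $p\ge q\ge d+1$ be integers and let $\mathcal F$ be a family of $n\ge 2p$ compact convex sets in $\mathbb R^d$ satisfying the $(p,q)$-property. Then there is a point of $\mathbb R^d$ contained in at least $c_d\,\dfrac{q\,n}{p^{\frac{q-1}{q-d}}}$ members of $\mathcal F$.
   Context: A family $\mathcal F$ of sets satisfies the $(p,q)$-property if $|\mathcal F|\ge p$, no member is empty, and among any $p$ members there are $q$ with a common point. *)

theory Defs
  imports "HOL-Analysis.Analysis"
begin

definition pq_property :: "nat \<Rightarrow> nat \<Rightarrow> 'a set set \<Rightarrow> bool" where
  "pq_property p q F \<longleftrightarrow>
     card F \<ge> p \<and> finite F \<and> {} \<notin> F \<and>
     (\<forall>S\<subseteq>F. card S = p \<longrightarrow> (\<exists>T\<subseteq>S. card T = q \<and> \<Inter>T \<noteq> {}))"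

end

theory Submission
  imports Defs
begin


lemma cp_sub:
  fixes A B :: "'a::euclidean_space set"
  assumes "closed A" "closed B" "convex B" "B \<subseteq> A" "closest_point A 0 \<in> B"
  shows "closest_point B 0 = closest_point A 0"
proof -
  have "\<forall>z\<in>B. dist 0 (closest_point A 0) \<le> dist 0 z"
    using closest_point_le[OF assms(1)] assms(4) by blast
  from closest_point_unique[OF assms(3,2,5) this] show ?thesis by simp
qed

lemma key_step:
  fixes I :: "'a::euclidean_space set set"
  assumes fin: "finite I" and cc: "\<forall>K\<in>I. closed K \<and> convex K"
    and ne: "\<Inter>I \<noteq> {}" and big: "card I \<ge> DIM('a) + 1"
  shows "\<exists>K\<in>I. closest_point (\<Inter>(I - {K})) 0 = closest_point (\<Inter>I) 0"
proof (rule ccontr)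
  assume H: "\<not> ?thesis"
  define x where "x = closest_point (\<Inter>I) 0"
  define r where "r = norm x"
  have clI: "closed (\<Inter>I)" using cc by (intro closed_Inter) auto
  have cvI: "convex (\<Inter>I)" using cc by (intro convex_Inter) auto
  have xI: "x \<in> \<Inter>I" unfolding x_def using closest_point_in_set[OF clI ne] .
  have xmin: "\<And>w. w \<in> \<Inter>I \<Longrightarrow> r \<le> norm w"
    using closest_point_le[OF clI] unfolding r_def x_def by (metis dist_0_norm)
  have yK: "\<exists>y. y \<in> \<Inter>(I - {K}) \<and> norm y < r" if K: "K \<in> I" for K
  proof -
    define A where "A = \<Inter>(I - {K})"
    have clA: "closed A" using cc unfolding A_def by (intro closed_Inter) auto
    have cvA: "convex A" using cc unfolding A_def by (intro convex_Inter) auto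
    have sub: "\<Inter>I \<subseteq> A" unfolding A_def by auto
    have xA: "x \<in> A" using xI sub by auto
    define y where "y = closest_point A 0"
    have yA: "y \<in> A" unfolding y_def using closest_point_in_set[OF clA] xA by blast
    have "norm y < r"
    proof (rule ccontr)
      assume "\<not> norm y < r"
      hence "\<forall>z\<in>A. dist 0 x \<le> dist 0 z"
        using closest_point_le[OF clA] unfolding y_def r_def by (metis dist_0_norm order_trans not_less)
      from closest_point_unique[OF cvA clA xA this] have "x = closest_point A 0" .
      thus False using H K unfolding A_def x_def by auto
    qed
    thus ?thesis using yA unfolding A_def by blast
  qed
  define G where "G = insert (ball (0::'a) r) I"
  have bI: "ball 0 r \<notin> I" using xI unfolding r_def by auto
  have cardG: "card G = card I + 1" unfolding G_def using bI fin by simp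
  have "\<Inter>G \<noteq> {}"
  proof (rule Helly)
    show "DIM('a) + 1 \<le> card G" using cardG big by simp
    show "\<forall>s\<in>G. convex s" using cc unfolding G_def by auto
  next
    fix t assume t: "t \<subseteq> G" "card t = DIM('a) + 1"
    have finG: "finite G" unfolding G_def using fin by simp
    have "t \<noteq> G" using t cardG big by auto
    then obtain g where g: "g \<in> G" "g \<notin> t" using t by blast
    show "\<Inter>t \<noteq> {}"
    proof (cases "g = ball 0 r")
      case True
      hence "t \<subseteq> I" using t g unfolding G_def by auto
      thus ?thesis using xI by blast
    next
      case False
      hence gI: "g \<in> I" using g unfolding G_def by auto
      obtain y where y: "y \<in> \<Inter>(I - {g})" "norm y < r" using yK[OF gI] by blast
      have "t \<subseteq> insert (ball 0 r) (I - {g})" using t g unfolding G_def by auto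
      hence "y \<in> \<Inter>t" using y by auto
      thus ?thesis by blast
    qed
  qed
  then obtain w where "w \<in> \<Inter>G" by blast
  hence "w \<in> \<Inter>I" "norm w < r" unfolding G_def by auto
  with xmin show False by fastforce
qed

lemma key_le:
  fixes T :: "'a::euclidean_space set set"
  assumes fin: "finite T" and cc: "\<forall>K\<in>T. closed K \<and> convex K" and ne: "\<Inter>T \<noteq> {}"
  shows "\<exists>I\<subseteq>T. card I \<le> DIM('a) \<and> closest_point (\<Inter>I) 0 \<in> \<Inter>T"
proof -
  have clT: "closed (\<Inter>T)" using cc by (intro closed_Inter) auto
  have "\<forall>I. I \<subseteq> T \<and> closest_point (\<Inter>I) 0 \<in> \<Inter>T \<and> card I = m \<longrightarrow>
        (\<exists>J\<subseteq>T. card J \<le> DIM('a) \<and> closest_point (\<Inter>J) 0 \<in> \<Inter>T)" for m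
  proof (induction m rule: nat_less_induct)
    case (1 m)
    show ?case
    proof (intro allI impI)
      fix I assume I: "I \<subseteq> T \<and> closest_point (\<Inter>I) 0 \<in> \<Inter>T \<and> card I = m"
      show "\<exists>J\<subseteq>T. card J \<le> DIM('a) \<and> closest_point (\<Inter>J) 0 \<in> \<Inter>T"
      proof (cases "card I \<le> DIM('a)")
        case True thus ?thesis using I by blast
      next
        case False
        have finI: "finite I" using I fin finite_subset by blast
        have neI: "\<Inter>I \<noteq> {}" using I by (metis Inter_anti_mono empty_iff subset_empty)
        obtain K where K: "K \<in> I" "closest_point (\<Inter>(I - {K})) 0 = closest_point (\<Inter>I) 0"
          using key_step[OF finI _ neI] False cc I by fastforce
        have "card (I - {K}) < m" using card_Diff1_less[OF finI K(1)] I by simp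
        moreover have "I - {K} \<subseteq> T \<and> closest_point (\<Inter>(I-{K})) 0 \<in> \<Inter>T" using I K by auto
        ultimately show ?thesis using 1 by blast
      qed
    qed
  qed
  moreover have "closest_point (\<Inter>T) 0 \<in> \<Inter>T" using closest_point_in_set[OF clT ne] .
  ultimately show ?thesis by blast
qed

lemma key_eq:
  fixes T :: "'a::euclidean_space set set"
  assumes fin: "finite T" and cc: "\<forall>K\<in>T. closed K \<and> convex K" and ne: "\<Inter>T \<noteq> {}"
    and big: "card T \<ge> DIM('a)"
  shows "\<exists>I\<subseteq>T. card I = DIM('a) \<and> closest_point (\<Inter>I) 0 \<in> \<Inter>T"
proof -
  obtain I0 where I0: "I0 \<subseteq> T" "card I0 \<le> DIM('a)" "closest_point (\<Inter>I0) 0 \<in> \<Inter>T"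
    using key_le[OF assms(1-3)] by blast
  have finI0: "finite I0" using I0 fin finite_subset by blast
  have "DIM('a) - card I0 \<le> card (T - I0)" using big I0 finI0 fin by (simp add: card_Diff_subset)
  then obtain J where J: "J \<subseteq> T - I0" "card J = DIM('a) - card I0" "finite J"
    by (rule obtain_subset_with_card_n)
  define I where "I = I0 \<union> J"
  have dj: "I0 \<inter> J = {}" using J by auto
  have cI: "card I = DIM('a)" unfolding I_def using card_Un_disjoint[OF finI0 J(3) dj] J I0 by simp
  have "closest_point (\<Inter>I) 0 = closest_point (\<Inter>I0) 0"
  proof (rule cp_sub)
    show "closed (\<Inter>I0)" using cc I0 by (intro closed_Inter) auto
    show "closed (\<Inter>I)" using cc I0 J unfolding I_def by (intro closed_Inter) auto
    show "convex (\<Inter>I)" using cc I0 J unfolding I_def by (intro convex_Inter) auto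
    show "\<Inter>I \<subseteq> \<Inter>I0" unfolding I_def by auto
    show "closest_point (\<Inter>I0) 0 \<in> \<Inter>I" using I0 J unfolding I_def by auto
  qed
  moreover have "I \<subseteq> T" using I0 J unfolding I_def by auto
  ultimately show ?thesis using I0 cI by (intro exI[of _ I]) auto
qed



lemma count_super:
  assumes fin: "finite F" and T: "T \<subseteq> F" "card T = q" and qm: "q \<le> m"
  shows "card {S. S \<subseteq> F \<and> card S = m \<and> T \<subseteq> S} = (card F - q) choose (m - q)"
proof -
  have finT: "finite T" using T fin finite_subset by blast
  have "bij_betw (\<lambda>S. S - T) {S. S \<subseteq> F \<and> card S = m \<and> T \<subseteq> S} {U. U \<subseteq> F - T \<and> card U = m - q}"
  proof (rule bij_betw_byWitness[where f' = "\<lambda>U. U \<union> T"])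
    show "\<forall>S\<in>{S. S \<subseteq> F \<and> card S = m \<and> T \<subseteq> S}. S - T \<union> T = S" by auto
    show "\<forall>U\<in>{U. U \<subseteq> F - T \<and> card U = m - q}. U \<union> T - T = U" by auto
    show "(\<lambda>S. S - T) ` {S. S \<subseteq> F \<and> card S = m \<and> T \<subseteq> S} \<subseteq> {U. U \<subseteq> F - T \<and> card U = m - q}"
    proof (rule image_subsetI)
      fix S assume "S \<in> {S. S \<subseteq> F \<and> card S = m \<and> T \<subseteq> S}"
      hence S: "S \<subseteq> F" "T \<subseteq> S" "card S = m" by auto
      have "finite S" using S fin finite_subset by blast
      hence "card (S - T) = m - q" using S T by (simp add: card_Diff_subset finT)
      thus "S - T \<in> {U. U \<subseteq> F - T \<and> card U = m - q}" using S by auto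
    qed
    show "(\<lambda>U. U \<union> T) ` {U. U \<subseteq> F - T \<and> card U = m - q} \<subseteq> {S. S \<subseteq> F \<and> card S = m \<and> T \<subseteq> S}"
    proof (rule image_subsetI)
      fix U assume "U \<in> {U. U \<subseteq> F - T \<and> card U = m - q}"
      hence U: "U \<subseteq> F - T" "card U = m - q" by auto
      have "finite U" using U fin finite_subset by blast
      moreover have "U \<inter> T = {}" using U by auto
      ultimately have "card (U \<union> T) = card U + q" using T U finT by (simp add: card_Un_disjoint)
      hence "card (U \<union> T) = m" using U qm by simp
      thus "U \<union> T \<in> {S. S \<subseteq> F \<and> card S = m \<and> T \<subseteq> S}" using U T by auto
    qed
  qed
  hence "card {S. S \<subseteq> F \<and> card S = m \<and> T \<subseteq> S} = card {U. U \<subseteq> F - T \<and> card U = m - q}"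
    by (rule bij_betw_same_card)
  also have "\<dots> = card (F - T) choose (m - q)" using fin by (simp add: n_subsets)
  also have "card (F - T) = card F - q" using T finT by (simp add: card_Diff_subset)
  finally show ?thesis .
qed

lemma greedy:
  assumes fin: "finite F" and QF: "\<forall>T\<in>Q. T \<subseteq> F \<and> card T = q" and q: "q \<ge> 1"
    and pq: "\<forall>S\<subseteq>F. card S = p \<longrightarrow> (\<exists>T\<in>Q. T \<subseteq> S)"
  shows "R \<subseteq> F \<Longrightarrow> card R \<ge> p \<Longrightarrow> card R + 1 \<le> q * card {T\<in>Q. T \<subseteq> R} + p"
proof (induction "card R" arbitrary: R rule: less_induct)
  case less
  have finQ: "finite Q" using QF fin by (intro finite_subset[of Q "Pow F"]) auto
  have finR: "finite R" using less fin finite_subset by blast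
  obtain S where S: "S \<subseteq> R" "card S = p" using obtain_subset_with_card_n[OF less(3)] by blast
  obtain T where T: "T \<in> Q" "T \<subseteq> S" using pq S less(2) by blast
  have cT: "card T = q" using QF T by auto
  have TR: "T \<subseteq> R" using T S by auto
  have finT: "finite T" using TR finR finite_subset by blast
  have Tne: "T \<noteq> {}" using cT q by auto
  show ?case
  proof (cases "card (R - T) \<ge> p")
    case True
    have lt: "card (R - T) < card R" using card_Diff_subset[OF finT TR] cT q card_mono[OF finR TR] by simp
    have IH: "card (R - T) + 1 \<le> q * card {T'\<in>Q. T' \<subseteq> R - T} + p"
      using less(1)[OF lt _ True] less(2) by auto
    have sub: "insert T {T'\<in>Q. T' \<subseteq> R - T} \<subseteq> {T'\<in>Q. T' \<subseteq> R}" using T TR by auto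
    have notin: "T \<notin> {T'\<in>Q. T' \<subseteq> R - T}" using Tne by auto
    have "card {T'\<in>Q. T' \<subseteq> R - T} + 1 \<le> card {T'\<in>Q. T' \<subseteq> R}"
      using card_mono[OF _ sub] notin finQ by simp
    moreover have "card (R - T) = card R - q" using TR finT cT by (simp add: card_Diff_subset)
    moreover have "card R \<ge> q" using card_mono[OF finR TR] cT by simp
    ultimately have A0: "card {T'\<in>Q. T' \<subseteq> R - T} + 1 \<le> card {T'\<in>Q. T' \<subseteq> R}"
      and B: "card R - q + 1 \<le> q * card {T'\<in>Q. T' \<subseteq> R - T} + p" and C: "q \<le> card R"
      using IH by simp_all
    have A: "q * (card {T'\<in>Q. T' \<subseteq> R - T} + 1) \<le> q * card {T'\<in>Q. T' \<subseteq> R}"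
      by (rule mult_le_mono2[OF A0])
    from A have "q * card {T'\<in>Q. T' \<subseteq> R - T} + q \<le> q * card {T'\<in>Q. T' \<subseteq> R}" by (simp add: algebra_simps)
    with B C show ?thesis by linarith
  next
    case False
    have "card (R - T) = card R - q" using TR finT cT by (simp add: card_Diff_subset)
    hence "card R + 1 \<le> q + p" using False by linarith
    moreover have "T \<in> {T'\<in>Q. T' \<subseteq> R}" using T TR by auto
    hence "card {T'\<in>Q. T' \<subseteq> R} > 0" using finQ by (auto simp: card_gt_0_iff)
    hence "q * 1 \<le> q * card {T'\<in>Q. T' \<subseteq> R}" by (intro mult_le_mono2) simp
    ultimately show ?thesis by linarith
  qed
qed

lemma double_count:
  assumes "finite M" "finite Q"
  shows "(\<Sum>S\<in>M. card {T\<in>Q. T \<subseteq> S}) = (\<Sum>T\<in>Q. card {S\<in>M. T \<subseteq> S})"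
proof -
  have "(\<Sum>S\<in>M. card {T\<in>Q. T \<subseteq> S}) = (\<Sum>S\<in>M. \<Sum>T\<in>Q. if T \<subseteq> S then 1 else 0)"
    using assms by (intro sum.cong refl) (subst sum.inter_filter[symmetric], auto)
  also have "\<dots> = (\<Sum>T\<in>Q. \<Sum>S\<in>M. if T \<subseteq> S then 1 else 0)" by (rule sum.swap)
  also have "\<dots> = (\<Sum>T\<in>Q. card {S\<in>M. T \<subseteq> S})"
    using assms by (intro sum.cong refl) (subst sum.inter_filter[symmetric], auto)
  finally show ?thesis .
qed

lemma inj_count:
  assumes QF: "\<forall>T\<in>Q. I T \<subseteq> T \<and> I T \<in> A \<and> T - I T \<subseteq> B (I T) \<and> card (T - I T) = k"
    and finA: "finite A" and B: "\<forall>a\<in>A. finite (B a) \<and> card (B a) \<le> D"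
  shows "card Q \<le> card A * (D choose k)"
proof -
  let ?S = "Sigma A (\<lambda>a. {J. J \<subseteq> B a \<and> card J = k})"
  have inj: "inj_on (\<lambda>T. (I T, T - I T)) Q"
  proof (rule inj_onI)
    fix T T' assume "T \<in> Q" "T' \<in> Q" "(I T, T - I T) = (I T', T' - I T')"
    hence "I T \<union> (T - I T) = I T' \<union> (T' - I T')" by auto
    moreover have "I T \<union> (T - I T) = T" "I T' \<union> (T' - I T') = T'" using QF \<open>T \<in> Q\<close> \<open>T' \<in> Q\<close> by auto
    ultimately show "T = T'" by simp
  qed
  have img: "(\<lambda>T. (I T, T - I T)) ` Q \<subseteq> ?S" using QF by auto
  have finS: "finite ?S" using finA B by (intro finite_SigmaI) auto
  have "card Q \<le> card ?S" using card_inj_on_le[OF inj img finS] .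
  also have "card ?S = (\<Sum>a\<in>A. card {J. J \<subseteq> B a \<and> card J = k})" using finA B by (intro card_SigmaI) auto
  also have "\<dots> = (\<Sum>a\<in>A. card (B a) choose k)" using B by (intro sum.cong) (auto simp: n_subsets)
  also have "\<dots> \<le> (\<Sum>a\<in>A. D choose k)" using B by (intro sum_mono binomial_right_mono) auto
  also have "\<dots> = card A * (D choose k)" by simp
  finally show ?thesis .
qed



lemma kk_le: "real k ^ k \<le> 3 ^ k * fact k"
proof -
  have "(\<Sum>n\<in>{k}. inverse (fact n) * real k ^ n) \<le> (\<Sum>n. inverse (fact n) * real k ^ n)"
    by (rule sum_le_suminf[OF summable_exp]) auto
  also have "\<dots> = exp (real k)" by (simp add: exp_def)
  also have "exp (real k) = exp 1 ^ k" using exp_of_nat_mult[of k 1] by simp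
  also have "\<dots> \<le> 3 ^ k" by (intro power_mono exp_le) auto
  finally have "inverse (fact k) * real k ^ k \<le> 3 ^ k" by simp
  thus ?thesis by (simp add: field_simps)
qed

lemma xk_le: fixes x :: real assumes "0 \<le> x" "x \<le> 1/2" "k \<ge> 1" shows "x ^ k * k \<le> x"
  using assms(3)
proof (induction k rule: dec_induct)
  case base then show ?case by simp
next
  case (step k)
  have xk: "x ^ k \<le> x" using power_decreasing[of 1 k x] assms step by simp
  have "x ^ Suc k * real (Suc k) = x * (x ^ k * k + x ^ k)" by (simp add: algebra_simps)
  also have "\<dots> \<le> x * (x + x)" using step xk assms by (intro mult_left_mono add_mono) auto
  also have "\<dots> \<le> x * 1" using assms by (intro mult_left_mono) auto
  finally show ?case by simp
qed

lemma const_ineq: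
  fixes d k q :: nat and c :: real
  assumes d1: "d \<ge> 1" and k1: "k \<ge> 1" and q: "q = d + k" and c: "c = 1 / (72 * (real d + 1)^2 * 2^d)"
  shows "(6 * c * q)^k * q * 2^q \<le> fact k"
proof -
  define x where "x = 36 * c * (real d + 1)"
  have dn: "real d + 1 \<noteq> 0" by simp
  have x: "x = 1 / (2 * (real d + 1) * 2^d)" unfolding x_def c using dn by (simp add: power2_eq_square divide_simps)
  have x0: "0 \<le> x" unfolding x by simp
  have "(2::real) * (real d + 1) * 2^d \<ge> 2" 
  proof -
    have "(real d + 1) * 2^d \<ge> 1 * 1" by (intro mult_mono) auto
    moreover have "(2::real) * (real d + 1) * 2^d = 2 * ((real d + 1) * 2^d)" by simp
    ultimately show ?thesis by linarith
  qed
  hence xh: "x \<le> 1/2" unfolding x by (simp add: field_simps)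
  have c0: "c \<ge> 0" unfolding c by simp
  have "real d * 1 \<le> real d * real k" using k1 by (intro mult_left_mono) auto
  hence qle: "real q \<le> (real d + 1) * k" using q by (simp add: distrib_right)
  have e2: "(2::real)^q = 2^k * 2^d" unfolding q by (simp add: power_add)
  have e12: "12 * c * q = (6 * c * q) * 2" by simp
  have e6: "(6 * c * q)^k * 2^k = (12 * c * q)^k" unfolding e12 by (simp only: power_mult_distrib)
  have "(6 * c * q)^k * q * 2^q = (12 * c * q)^k * q * 2^d"
    unfolding e2 e6[symmetric] by (simp only: mult_ac)
  also have "\<dots> \<le> (12 * c * ((real d + 1) * k))^k * ((real d + 1) * k) * 2^d"
    using qle c0 by (intro mult_right_mono mult_mono power_mono) auto
  also have "\<dots> = (12 * c * (real d + 1))^k * real k ^ k * ((real d + 1) * k) * 2^d"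
    by (simp only: power_mult_distrib)
  also have "\<dots> \<le> (12 * c * (real d + 1))^k * (3^k * fact k) * ((real d + 1) * k) * 2^d"
    using kk_le[of k] c0 by (intro mult_right_mono mult_left_mono) auto
  also have "\<dots> = (x ^ k * k) * ((real d + 1) * 2^d) * fact k"
  proof -
    have "x = (12 * c * (real d + 1)) * 3" unfolding x_def by simp
    hence "x ^ k = (12 * c * (real d + 1))^k * 3^k" by (simp only: power_mult_distrib)
    thus ?thesis by (simp only: mult_ac)
  qed
  also have "\<dots> \<le> x * ((real d + 1) * 2^d) * fact k"
    using xk_le[OF x0 xh k1] by (intro mult_right_mono) auto
  also have "x * ((real d + 1) * 2^d) = 1/2" unfolding x by simp
  finally have "(6 * c * q)^k * q * 2^q \<le> 1/2 * fact k" .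
  moreover have "(0::real) \<le> fact k" by simp
  ultimately show ?thesis by linarith
qed

lemma main_arith:
  fixes d p q n D k :: nat and c :: real
  assumes d1: "d \<ge> 1" and q: "q = d + k" and k1: "k \<ge> 1" and pq: "q \<le> p" and n: "2*p \<le> n"
    and c: "c = 1 / (72 * (real d + 1)^2 * 2^d)"
    and main: "p * ((n-d) choose k) \<le> q * (D choose k) * ((2*p) choose d) * ((2*p-d) choose k)"
  shows "c * q * n / p powr (real (q-1) / real k) \<le> D"
proof -
  have p0: "p > 0" using pq q d1 by simp
  have f1n: "(2*p) choose d \<le> (2*p)^d" by (rule binomial_le_pow) (use pq q in simp)
  have "real ((2*p) choose d) \<le> real ((2*p)^d)" using f1n by (simp only: of_nat_le_iff)
  hence f1: "real ((2*p) choose d) \<le> (2*p)^d" by simp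
  have "((2*p-d) choose k) * fact k \<le> (2*p-d)^k" by (rule binomial_fact_pow)
  also have "\<dots> \<le> (2*p)^k" by (intro power_mono) auto
  finally have "real (((2*p-d) choose k) * fact k) \<le> real ((2*p)^k)" by (simp only: of_nat_le_iff)
  hence f2: "real ((2*p-d) choose k) * fact k \<le> (2*p)^k" by simp
  have "(D choose k) * fact k \<le> D^k" by (rule binomial_fact_pow)
  hence "real ((D choose k) * fact k) \<le> real (D^k)" by (simp only: of_nat_le_iff)
  hence f3: "real (D choose k) * fact k \<le> real D ^ k" by simp
  have f4: "(real (n-d) / real k)^k \<le> real ((n-d) choose k)"
    by (rule binomial_ge_n_over_k_pow_k) (use pq q n in simp)
  have mainR: "real p * real ((n-d) choose k) \<le> real q * real (D choose k) * real ((2*p) choose d) * real ((2*p-d) choose k)"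
  proof -
    have "real (p * ((n-d) choose k)) \<le> real (q * (D choose k) * ((2*p) choose d) * ((2*p-d) choose k))"
      using main by (simp only: of_nat_le_iff)
    thus ?thesis by simp
  qed
  have E0: "real p * (real (n-d) / real k)^k * fact k * fact k \<le> real q * real D ^ k * (2*p)^q"
  proof -
    have "real p * (real (n-d) / real k)^k * fact k * fact k \<le> real p * real ((n-d) choose k) * fact k * fact k"
      using f4 by (intro mult_right_mono mult_left_mono) auto
    also have "\<dots> \<le> real q * real (D choose k) * real ((2*p) choose d) * real ((2*p-d) choose k) * fact k * fact k"
      using mainR by (intro mult_right_mono) auto
    also have "\<dots> = real q * (real (D choose k) * fact k) * real ((2*p) choose d) * (real ((2*p-d) choose k) * fact k)"
      by (simp add: algebra_simps)
    also have "\<dots> \<le> real q * real D ^ k * (2*p)^d * (2*p)^k"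
      using f1 f2 f3 by (intro mult_mono) auto
    also have "\<dots> = real q * real D ^ k * (2*p)^q" unfolding q by (simp add: power_add)
    finally show ?thesis .
  qed
  have nd: "real n / 2 \<le> real (n-d)" using pq q n by simp
  have E1: "real n ^ k / (2^k * (3^k * fact k)) \<le> (real (n-d) / real k)^k"
  proof -
    have "real n ^ k / (2^k * (3^k * fact k)) \<le> real n ^ k / (2^k * real k ^ k)"
      using kk_le[of k] k1 by (intro divide_left_mono mult_left_mono mult_pos_pos) auto
    also have "\<dots> = (real n / 2 / real k)^k" by (simp add: power_divide power_mult_distrib)
    also have "\<dots> \<le> (real (n-d) / real k)^k" using nd by (intro power_mono divide_right_mono) auto
    finally show ?thesis .
  qed
  have E2: "real p * real n ^ k * fact k \<le> 6^k * real q * real D ^ k * 2^q * real p ^ q"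
  proof -
    have "real p * (real n ^ k / (2^k * (3^k * fact k))) * fact k * fact k \<le> real q * real D ^ k * (2*p)^q"
    proof -
      have "real p * (real n ^ k / (2^k * (3^k * fact k))) * fact k * fact k \<le> real p * (real (n-d) / real k)^k * fact k * fact k"
        using E1 by (intro mult_right_mono mult_left_mono) auto
      thus ?thesis using E0 by linarith
    qed
    moreover have "real p * (real n ^ k / (2^k * (3^k * fact k))) * fact k * fact k = real p * real n ^ k * fact k / (2^k * 3^k)"
      by (simp add: field_simps)
    moreover have "(2::real)^k * 3^k = (2*3)^k" by (simp only: power_mult_distrib)
    ultimately have "real p * real n ^ k * fact k / 6^k \<le> real q * real D ^ k * (2*p)^q" by simp
    thus ?thesis by (simp add: field_simps power_mult_distrib)
  qed
  have CI: "(6 * c * q)^k * q * 2^q \<le> fact k" by (rule const_ineq[OF d1 k1 q c])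
  have E3: "(c * q * n)^k * p \<le> real D ^ k * real p ^ q"
  proof -
    have "6^k * real q * 2^q * ((c * q * n)^k * p) = (6 * c * q)^k * q * 2^q * (real p * real n ^ k)"
      by (simp add: power_mult_distrib algebra_simps)
    also have "\<dots> \<le> fact k * (real p * real n ^ k)" using CI by (intro mult_right_mono) auto
    also have "\<dots> \<le> 6^k * real q * 2^q * (real D ^ k * real p ^ q)" using E2 by (simp add: algebra_simps)
    finally have "6^k * real q * 2^q * ((c * q * n)^k * p) \<le> 6^k * real q * 2^q * (real D ^ k * real p ^ q)" .
    moreover have "0 < 6^k * real q * 2^q" using q k1 by simp
    ultimately show ?thesis by (rule mult_left_le_imp_le)
  qed
  define P where "P = real p powr (real (q-1) / real k)"
  have P0: "P > 0" unfolding P_def using p0 by simp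
  have Pk: "P ^ k = real p ^ (q - 1)"
  proof -
    have "P ^ k = real p powr (real (q-1) / real k * real k)"
      unfolding P_def using p0 by (simp add: powr_realpow[symmetric] powr_powr)
    also have "\<dots> = real p ^ (q-1)" using k1 p0 by (simp add: powr_realpow)
    finally show ?thesis .
  qed
  have pq1: "real p ^ q = real p * real p ^ (q - 1)" using pq q d1
    by (metis Suc_diff_1 add_gr_0 less_le_trans power_Suc zero_less_one)
  define B where "B = c * q * n / P"
  have c0: "c \<ge> 0" unfolding c by simp
  have B0: "B \<ge> 0" unfolding B_def using P0 c0 by simp
  have "B ^ k = (c * q * n)^k / real p ^ (q-1)" unfolding B_def by (simp add: power_divide Pk)
  also have "\<dots> \<le> real D ^ k"
  proof -
    have "(c * q * n)^k * p \<le> real D ^ k * real p ^ (q-1) * p" using E3 pq1 by (simp add: algebra_simps)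
    hence "(c * q * n)^k \<le> real D ^ k * real p ^ (q-1)" using p0 by simp
    thus ?thesis using p0 by (simp add: divide_le_eq)
  qed
  finally have "B ^ k \<le> real D ^ k" .
  hence "B \<le> real D" using power_le_imp_le_base[of B "k-1" "real D"] k1 by simp
  thus ?thesis unfolding B_def P_def .
qed


theorem proposition2p3:
  "\<exists>c::real. c > 0 \<and>
     (\<forall>(p::nat) (q::nat) (n::nat) (F :: (real^'d) set set).
        p \<ge> q \<and> q \<ge> CARD('d) + 1 \<and> finite F \<and> card F = n \<and> n \<ge> 2 * p \<and>
        (\<forall>K\<in>F. compact K \<and> convex K) \<and> pq_property p q F \<longrightarrow>
        (\<exists>x::real^'d. real (card {K\<in>F. x \<in> K}) \<ge>
            c * real q * real n / (real p powr (real (q - 1) / real (q - CARD('d))))))"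
proof -
  define d where "d = CARD('d)"
  define c :: real where "c = 1 / (72 * (real d + 1)^2 * 2^d)"
  have d1: "d \<ge> 1" unfolding d_def by (simp add: Suc_le_eq)
  have DIMd: "DIM(real^'d) = d" unfolding d_def by simp
  have "c > 0" unfolding c_def by simp
  moreover have "\<forall>(p::nat) (q::nat) (n::nat) (F :: (real^'d) set set).
        p \<ge> q \<and> q \<ge> CARD('d) + 1 \<and> finite F \<and> card F = n \<and> n \<ge> 2 * p \<and>
        (\<forall>K\<in>F. compact K \<and> convex K) \<and> pq_property p q F \<longrightarrow>
        (\<exists>x::real^'d. real (card {K\<in>F. x \<in> K}) \<ge>
            c * real q * real n / (real p powr (real (q - 1) / real (q - CARD('d)))))"
  proof (intro allI impI)
    fix p q n :: nat and F :: "(real^'d) set set"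
    assume A: "p \<ge> q \<and> q \<ge> CARD('d) + 1 \<and> finite F \<and> card F = n \<and> n \<ge> 2 * p \<and>
        (\<forall>K\<in>F. compact K \<and> convex K) \<and> pq_property p q F"
    have pq: "q \<le> p" and qd: "d + 1 \<le> q" and fin: "finite F" and cF: "card F = n" and n: "2*p \<le> n"
      and cc: "\<forall>K\<in>F. compact K \<and> convex K" and pqp: "pq_property p q F"
      using A unfolding d_def by auto
    have ccl: "\<forall>K\<in>F. closed K \<and> convex K" using cc compact_imp_closed by blast
    define k where "k = q - d"
    have qk: "q = d + k" and k1: "k \<ge> 1" using qd unfolding k_def by auto
    define Dep where "Dep x = {K\<in>F. x \<in> K}" for x :: "real^'d"
    have finDep: "finite (Dep x)" for x unfolding Dep_def using fin by simp
    have Dle: "card (Dep x) \<le> n" for x unfolding Dep_def cF[symmetric] using fin by (intro card_mono) auto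
    have finR: "finite (range (\<lambda>x. card (Dep x)))"
      by (rule finite_subset[of _ "{..n}"]) (use Dle in auto)
    obtain x0 where x0: "card (Dep x0) = Max (range (\<lambda>x. card (Dep x)))"
      using Max_in[OF finR] by auto
    define D where "D = card (Dep x0)"
    have DepD: "card (Dep x) \<le> D" for x unfolding D_def x0 using finR by (intro Max_ge) auto
    define Q where "Q = {T. T \<subseteq> F \<and> card T = q \<and> \<Inter>T \<noteq> {}}"
    have QPow: "Q \<subseteq> Pow F" unfolding Q_def by auto
    have finQ: "finite Q" using finite_subset[OF QPow] fin by simp
    define I :: "(real^'d) set set \<Rightarrow> (real^'d) set set" where "I T = (SOME I. I \<subseteq> T \<and> card I = d \<and> closest_point (\<Inter>I) 0 \<in> \<Inter>T)" for T
    have IT: "I T \<subseteq> T \<and> card (I T) = d \<and> closest_point (\<Inter>(I T)) 0 \<in> \<Inter>T" if T: "T \<in> Q" for T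
    proof -
      have TF: "T \<subseteq> F" "card T = q" "\<Inter>T \<noteq> {}" using T unfolding Q_def by auto
      have finT: "finite T" using TF fin finite_subset by blast
      have "\<exists>I\<subseteq>T. card I = DIM(real^'d) \<and> closest_point (\<Inter>I) 0 \<in> \<Inter>T"
        by (rule key_eq[OF finT]) (use TF ccl qd DIMd in auto)
      hence "\<exists>I. I \<subseteq> T \<and> card I = d \<and> closest_point (\<Inter>I) 0 \<in> \<Inter>T" using DIMd by auto
      thus ?thesis unfolding I_def by (rule someI_ex)
    qed
    have claim1: "card Q \<le> (n choose d) * (D choose k)"
    proof -
      have "card Q \<le> card {J. J \<subseteq> F \<and> card J = d} * (D choose k)"
      proof (rule inj_count[where I = I and B = "\<lambda>J. Dep (closest_point (\<Inter>J) 0)"])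
        show "finite {J. J \<subseteq> F \<and> card J = d}" using fin by simp
        show "\<forall>a\<in>{J. J \<subseteq> F \<and> card J = d}. finite (Dep (closest_point (\<Inter>a) 0)) \<and> card (Dep (closest_point (\<Inter>a) 0)) \<le> D"
          using finDep DepD by auto
        show "\<forall>T\<in>Q. I T \<subseteq> T \<and> I T \<in> {J. J \<subseteq> F \<and> card J = d} \<and> T - I T \<subseteq> Dep (closest_point (\<Inter>(I T)) 0) \<and> card (T - I T) = k"
        proof
          fix T assume T: "T \<in> Q"
          have TF: "T \<subseteq> F" "card T = q" using T unfolding Q_def by auto
          have finT: "finite T" using TF fin finite_subset by blast
          note ITT = IT[OF T]
          have finIT: "finite (I T)" using IT[OF T] finT finite_subset by blast
          have cTI: "card (T - I T) = k" using card_Diff_subset[OF finIT] IT[OF T] TF unfolding k_def by simp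
          show "I T \<subseteq> T \<and> I T \<in> {J. J \<subseteq> F \<and> card J = d} \<and> T - I T \<subseteq> Dep (closest_point (\<Inter>(I T)) 0) \<and> card (T - I T) = k"
            using TF ITT cTI unfolding Dep_def by auto
        qed
      qed
      thus ?thesis using fin cF by (simp add: n_subsets)
    qed
    define M where "M = {S. S \<subseteq> F \<and> card S = 2*p}"
    have finM: "finite M" unfolding M_def using fin by simp
    have pqQ: "\<forall>S\<subseteq>F. card S = p \<longrightarrow> (\<exists>T\<in>Q. T \<subseteq> S)"
    proof (intro allI impI)
      fix S assume S: "S \<subseteq> F" "card S = p"
      obtain T where T: "T \<subseteq> S" "card T = q" "\<Inter>T \<noteq> {}" using pqp S unfolding pq_property_def by blast
      have "T \<in> Q" using T S unfolding Q_def by blast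
      thus "\<exists>T\<in>Q. T \<subseteq> S" using T by blast
    qed
    have QF: "\<forall>T\<in>Q. T \<subseteq> F \<and> card T = q" unfolding Q_def by auto
    have fS: "p \<le> q * card {T\<in>Q. T \<subseteq> S}" if S: "S \<in> M" for S
    proof -
      have "card S + 1 \<le> q * card {T\<in>Q. T \<subseteq> S} + p"
        by (rule greedy[OF fin QF _ pqQ]) (use S qd pq in \<open>auto simp: M_def\<close>)
      thus ?thesis using S unfolding M_def by simp
    qed
    have "p * card M = (\<Sum>S\<in>M. p)" by simp
    also have "\<dots> \<le> (\<Sum>S\<in>M. q * card {T\<in>Q. T \<subseteq> S})" by (intro sum_mono fS)
    also have "\<dots> = q * (\<Sum>S\<in>M. card {T\<in>Q. T \<subseteq> S})" by (simp add: sum_distrib_left)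
    also have "(\<Sum>S\<in>M. card {T\<in>Q. T \<subseteq> S}) = (\<Sum>T\<in>Q. card {S\<in>M. T \<subseteq> S})"
      by (rule double_count[OF finM finQ])
    also have "\<dots> = (\<Sum>T\<in>Q. (n - q) choose (2*p - q))"
    proof (rule sum.cong[OF refl])
      fix T assume T: "T \<in> Q"
      have "{S\<in>M. T \<subseteq> S} = {S. S \<subseteq> F \<and> card S = 2*p \<and> T \<subseteq> S}" unfolding M_def by auto
      also have "card \<dots> = (card F - q) choose (2*p - q)"
        by (rule count_super[OF fin]) (use QF T pq in auto)
      finally show "card {S\<in>M. T \<subseteq> S} = (n - q) choose (2*p - q)" using cF by simp
    qed
    also have "\<dots> = card Q * ((n - q) choose (2*p - q))" by simp
    finally have claim2: "p * (n choose (2*p)) \<le> q * (card Q * ((n - q) choose (2*p - q)))"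
      using fin cF by (simp add: M_def n_subsets)
    have c12: "p * (n choose (2*p)) \<le> q * (n choose d) * (D choose k) * ((n - q) choose (2*p - q))"
    proof -
      have h: "q * (card Q * ((n - q) choose (2*p - q))) \<le> q * ((n choose d) * (D choose k) * ((n - q) choose (2*p - q)))"
        by (intro mult_le_mono2 mult_le_mono1 claim1)
      have "p * (n choose (2*p)) \<le> q * ((n choose d) * (D choose k) * ((n - q) choose (2*p - q)))"
        using order_trans[OF claim2 h] .
      thus ?thesis by (simp only: mult.assoc)
    qed
    have cm1: "(n choose (2*p)) * ((2*p) choose q) = (n choose q) * ((n-q) choose (2*p-q))"
      by (rule choose_mult) (use pq n in auto)
    have cm2: "(n choose q) * (q choose d) = (n choose d) * ((n-d) choose k)"
      unfolding k_def by (rule choose_mult) (use pq n qd in auto)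
    have cm3: "((2*p) choose q) * (q choose d) = ((2*p) choose d) * ((2*p-d) choose k)"
      unfolding k_def by (rule choose_mult) (use pq qd in auto)
    define X where "X = (n choose d) * ((n-q) choose (2*p-q))"
    have X0: "X > 0" unfolding X_def using pq n qd by (simp add: zero_less_binomial)
    have "X * (p * ((n-d) choose k)) = p * ((n choose (2*p)) * ((2*p) choose q)) * (q choose d)"
      unfolding X_def cm1 by (simp add: cm2[symmetric] ac_simps)
    also have "\<dots> = p * (n choose (2*p)) * (((2*p) choose q) * (q choose d))" by (simp only: ac_simps)
    also have "\<dots> \<le> q * (n choose d) * (D choose k) * ((n - q) choose (2*p - q)) * (((2*p) choose q) * (q choose d))"
      using c12 by (rule mult_le_mono1)
    also have "\<dots> = X * (q * (D choose k) * ((2*p) choose d) * ((2*p-d) choose k))"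
      unfolding X_def cm3 by (simp only: ac_simps)
    finally have mainN: "p * ((n-d) choose k) \<le> q * (D choose k) * ((2*p) choose d) * ((2*p-d) choose k)"
      using X0 by simp
    have "c * q * n / p powr (real (q-1) / real k) \<le> D"
      by (rule main_arith[OF d1 qk k1 pq n c_def mainN])
    hence "c * real q * real n / (real p powr (real (q - 1) / real (q - CARD('d)))) \<le> real (card {K\<in>F. x0 \<in> K})"
      unfolding D_def Dep_def k_def d_def by simp
    thus "\<exists>x::real^'d. real (card {K\<in>F. x \<in> K}) \<ge>
            c * real q * real n / (real p powr (real (q - 1) / real (q - CARD('d))))" by blast
  qed
  ultimately show ?thesis by blast
qed

end
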